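(* Let $X$ be a Banach space over $\mathbb R$ and let $\sum_n x_n$ be a series in $X$ which is not unconditionally convergent. Let $\mathcal I$ be an ideal on $\mathbb N$ with the Baire property. Then the set $$B(\mathcal I):=\left\{t \in \{-1,1\}^{\mathbb N} \colon \sum_n t(n)x_n \text{ is } \mathcal I\text{-convergent}\right\}$$ is meager in $\{-1,1\}^{\mathbb N}$ (with the product topology).
   Context: $\mathbb N=\{1,2,\dots\}$. An ideal on $\mathbb N$ is a family $\mathcal I\subset\mathcal P(\mathbb N)$ closed under finite unions and subsets, with $\mathbb N\notin\mathcal I$ and containing all finite subsets of $\mathbb N$. Identifying subsets of $\mathbb N$ with their characteristic functions, $\mathcal I$ is regarded as a subset of the Cantor space $\{0,1\}^{\mathbb N}$ (product topology), and "$\mathcal I$ has the Baire property" refers to this subset. A sequence $(y_n)$ in a normed space is $\mathcal I$-convergent to $y$ if $\{n:\|y_n-y\|>\varepsilon\}\in\mathcal I$ for every $\varepsilon>0$; a series is $\mathcal I$-convergent if its sequence of partial sums is $\mathcal I$-convergent to some element. A series $\sum_n x_n$ is unconditionally convergent if $\sum_n x_{p(n)}$ converges for every permutation $p$ of $\mathbb N$. *)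

theory Defs
  imports "HOL-Analysis.Analysis"
begin

text \<open>Ideals on the natural numbers (indexed from 0 here).\<close>
definition is_ideal :: "nat set set \<Rightarrow> bool" where
  "is_ideal \<I> \<longleftrightarrow>
     (\<forall>A\<in>\<I>. \<forall>B. B \<subseteq> A \<longrightarrow> B \<in> \<I>) \<and>
     (\<forall>A\<in>\<I>. \<forall>B\<in>\<I>. A \<union> B \<in> \<I>) \<and>
     UNIV \<notin> \<I> \<and>
     (\<forall>A. finite A \<longrightarrow> A \<in> \<I>)"

definition I_convergent_to :: "nat set set \<Rightarrow> (nat \<Rightarrow> 'a::real_normed_vector) \<Rightarrow> 'a \<Rightarrow> bool" where
  "I_convergent_to \<I> y L \<longleftrightarrow> (\<forall>\<epsilon>>0. {n. norm (y n - L) > \<epsilon>} \<in> \<I>)"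

definition I_convergent_series :: "nat set set \<Rightarrow> (nat \<Rightarrow> 'a::real_normed_vector) \<Rightarrow> bool" where
  "I_convergent_series \<I> x \<longleftrightarrow> (\<exists>L. I_convergent_to \<I> (\<lambda>n. \<Sum>k\<le>n. x k) L)"

definition unconditionally_convergent :: "(nat \<Rightarrow> 'a::real_normed_vector) \<Rightarrow> bool" where
  "unconditionally_convergent x \<longleftrightarrow> (\<forall>p. bij p \<longrightarrow> summable (\<lambda>n. x (p n)))"

definition nowhere_dense_in :: "'a topology \<Rightarrow> 'a set \<Rightarrow> bool" where
  "nowhere_dense_in T S \<longleftrightarrow> S \<subseteq> topspace T \<and> T interior_of (T closure_of S) = {}"

definition meager_in :: "'a topology \<Rightarrow> 'a set \<Rightarrow> bool" where
  "meager_in T S \<longleftrightarrow> S \<subseteq> topspace T \<and>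
     (\<exists>F. countable F \<and> (\<forall>N\<in>F. nowhere_dense_in T N) \<and> S \<subseteq> \<Union>F)"

definition has_Baire_property_in :: "'a topology \<Rightarrow> 'a set \<Rightarrow> bool" where
  "has_Baire_property_in T S \<longleftrightarrow> S \<subseteq> topspace T \<and>
     (\<exists>U. openin T U \<and> meager_in T ((S - U) \<union> (U - S)))"

text \<open>Cantor space {0,1}^N, with True = 1, and sets identified with characteristic functions.\<close>
definition cantor_space :: "(nat \<Rightarrow> bool) topology" where
  "cantor_space = product_topology (\<lambda>_. discrete_topology (UNIV :: bool set)) UNIV"

definition ideal_has_Baire_property :: "nat set set \<Rightarrow> bool" where
  "ideal_has_Baire_property \<I> \<longleftrightarrow> has_Baire_property_in cantor_space ((\<lambda>A n. n \<in> A) ` \<I>)"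

definition sign_space :: "(nat \<Rightarrow> real) topology" where
  "sign_space = product_topology (\<lambda>_. subtopology euclideanreal {-1, 1}) UNIV"

end

theory Submission
  imports Defs "HOL-Analysis.Analysis"
begin


definition cyl :: "'b topology \<Rightarrow> (nat \<Rightarrow> 'b) \<Rightarrow> nat \<Rightarrow> (nat \<Rightarrow> 'b) set" where
  "cyl X p m = {t \<in> topspace (product_topology (\<lambda>_. X) UNIV). \<forall>n<m. t n = p n}"

lemma topspace_PS: "topspace (product_topology (\<lambda>_. X) UNIV) = {t. \<forall>n. t n \<in> topspace X}"
  by (auto simp: PiE_def extensional_def)

lemma cyl_open:
  assumes sing: "\<And>a. a \<in> topspace X \<Longrightarrow> openin X {a}"
    and p: "\<And>n. p n \<in> topspace X"
  shows "openin (product_topology (\<lambda>_. X) UNIV) (cyl X p m)"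
  unfolding openin_product_topology_alt
proof
  fix x assume x: "x \<in> cyl X p m"
  define U where "U i = (if i < m then {p i} else topspace X)" for i
  show "\<exists>U. finite {i \<in> UNIV. U i \<noteq> topspace X} \<and>
             (\<forall>i\<in>UNIV. openin X (U i)) \<and> x \<in> Pi\<^sub>E UNIV U \<and> Pi\<^sub>E UNIV U \<subseteq> cyl X p m"
  proof (intro exI conjI)
    show "finite {i \<in> UNIV. U i \<noteq> topspace X}"
    proof (rule finite_subset[of _ "{..<m}"])
      show "{i \<in> UNIV. U i \<noteq> topspace X} \<subseteq> {..<m}"
      proof
        fix i assume "i \<in> {i \<in> UNIV. U i \<noteq> topspace X}"
        then show "i \<in> {..<m}" unfolding U_def by (cases "i < m") auto
      qed
    qed simp
    show "\<forall>i\<in>UNIV. openin X (U i)" using sing p by (auto simp: U_def)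
    show "x \<in> Pi\<^sub>E UNIV U" using x by (auto simp: U_def cyl_def topspace_PS)
    show "Pi\<^sub>E UNIV U \<subseteq> cyl X p m"
    proof
      fix y assume "y \<in> Pi\<^sub>E UNIV U"
      then have "\<And>i. y i \<in> U i" by auto
      have "y i = p i" if "i < m" for i using \<open>\<And>i. y i \<in> U i\<close>[of i] that by (simp add: U_def)
      moreover have "y i \<in> topspace X" for i using \<open>\<And>i. y i \<in> U i\<close>[of i] p by (simp add: U_def split: if_splits)
      ultimately show "y \<in> cyl X p m" unfolding cyl_def topspace_PS by blast
    qed
  qed
qed

lemma open_cyl:
  assumes "openin (product_topology (\<lambda>_. X) UNIV) U" "x \<in> U"
  shows "\<exists>m. cyl X x m \<subseteq> U"
proof -
  obtain V where V: "finite {i \<in> UNIV. V i \<noteq> topspace X}" "\<forall>i\<in>UNIV. openin X (V i)"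
    "x \<in> Pi\<^sub>E UNIV V" "Pi\<^sub>E UNIV V \<subseteq> U"
    using assms unfolding openin_product_topology_alt by blast
  obtain m where m: "\<And>i. i \<in> {i. V i \<noteq> topspace X} \<Longrightarrow> i < m"
    using V(1) finite_nat_set_iff_bounded by (metis (no_types, lifting) UNIV_I mem_Collect_eq)
  have "cyl X x m \<subseteq> Pi\<^sub>E UNIV V"
  proof
    fix y assume y: "y \<in> cyl X x m"
    have "y i \<in> V i" for i
    proof (cases "V i = topspace X")
      case True then show ?thesis using y by (auto simp: cyl_def topspace_PS)
    next
      case False then have "i < m" using m by auto
      then show ?thesis using y V(3) by (auto simp: cyl_def)
    qed
    then show "y \<in> Pi\<^sub>E UNIV V" by (auto simp: PiE_def extensional_def)
  qed
  then show ?thesis using V(4) by blast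
qed

lemma nd_intro:
  assumes "S \<subseteq> topspace T"
    and H: "\<And>U. openin T U \<Longrightarrow> U \<noteq> {} \<Longrightarrow> \<exists>V. openin T V \<and> V \<noteq> {} \<and> V \<subseteq> U \<and> V \<inter> S = {}"
  shows "nowhere_dense_in T S"
proof -
  have "T interior_of (T closure_of S) = {}"
  proof (rule ccontr)
    assume ne: "T interior_of (T closure_of S) \<noteq> {}"
    have oi: "openin T (T interior_of (T closure_of S))" by simp
    obtain V where V: "openin T V" "V \<noteq> {}" "V \<subseteq> T interior_of (T closure_of S)" "V \<inter> S = {}"
      using H[OF oi ne] by blast
    have "V \<inter> T closure_of S = {}" using openin_Int_closure_of_eq_empty[OF V(1)] V(4) by simp
    moreover have "V \<subseteq> T closure_of S" using V(3) interior_of_subset[of T "T closure_of S"] by simp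
    ultimately show False using V(2) by blast
  qed
  then show ?thesis using assms(1) unfolding nowhere_dense_in_def by simp
qed

lemma nd_dest:
  assumes "nowhere_dense_in T S" "openin T U" "U \<noteq> {}"
  shows "\<exists>V. openin T V \<and> V \<noteq> {} \<and> V \<subseteq> U \<and> V \<inter> T closure_of S = {}"
proof -
  have o: "openin T (U - T closure_of S)" using assms(2) by (simp add: openin_diff)
  have ne: "U - T closure_of S \<noteq> {}"
  proof
    assume "U - T closure_of S = {}"
    then have "U \<subseteq> T closure_of S" by blast
    then have "U \<subseteq> T interior_of (T closure_of S)" using interior_of_maximal assms(2) by metis
    moreover have "T interior_of (T closure_of S) = {}" using assms(1) unfolding nowhere_dense_in_def by simp
    ultimately show False using assms(3) by simp
  qed
  show ?thesis
    by (rule exI[of _ "U - T closure_of S"]) (use o ne in blast)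
qed



definition psum :: "(nat \<Rightarrow> 'a::real_normed_vector) \<Rightarrow> (nat \<Rightarrow> real) \<Rightarrow> nat \<Rightarrow> 'a" where
  "psum x t n = (\<Sum>k\<le>n. t k *\<^sub>R x k)"

lemma psum_cong: "(\<And>k. k \<le> n \<Longrightarrow> t k = t' k) \<Longrightarrow> psum x t n = psum x t' n"
  unfolding psum_def by (rule sum.cong) auto

lemma psum_Suc: "psum x t (Suc n) = psum x t n + t (Suc n) *\<^sub>R x (Suc n)"
  unfolding psum_def by simp

lemma greedy_step:
  fixes c w v :: "'a::real_normed_vector"
  shows "norm (c - v) \<le> max (norm (c + w - v)) (norm (c - w - v))"
proof -
  have "2 *\<^sub>R (c - v) = (c + w - v) + (c - w - v)" by (simp add: algebra_simps scaleR_2)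
  then have "2 * norm (c - v) \<le> norm (c + w - v) + norm (c - w - v)"
    by (metis norm_scaleR norm_triangle_ineq abs_numeral)
  then show ?thesis by linarith
qed

lemma blocks:
  fixes x :: "nat \<Rightarrow> 'a::banach"
  assumes "\<not> unconditionally_convergent x"
  shows "\<exists>\<epsilon>>0. \<forall>N. \<exists>a b s. N \<le> a \<and> a \<le> b \<and> (\<forall>n. s n \<in> {-1,1::real}) \<and>
            \<epsilon> < norm (\<Sum>n\<in>{a..b}. s n *\<^sub>R x n)"
proof (rule ccontr)
  assume H0: "\<not> ?thesis"
  have H: "\<exists>N. \<forall>a b s. N \<le> a \<longrightarrow> a \<le> b \<longrightarrow> (\<forall>n. s n \<in> {-1,1::real}) \<longrightarrow>
            norm (\<Sum>n\<in>{a..b}. s n *\<^sub>R x n) \<le> e" if "e > 0" for e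
    using H0 that by (meson not_le)
  have F: "\<exists>N. \<forall>F. finite F \<longrightarrow> F \<subseteq> {N..} \<longrightarrow> norm (\<Sum>n\<in>F. x n) \<le> e" if epos: "e > 0" for e
  proof -
    obtain N where N: "\<And>a b s. N \<le> a \<Longrightarrow> a \<le> b \<Longrightarrow> (\<forall>n. s n \<in> {-1,1::real}) \<Longrightarrow>
            norm (\<Sum>n\<in>{a..b}. s n *\<^sub>R x n) \<le> e"
      using H[OF epos] by blast
    show ?thesis
    proof (intro exI allI impI)
      fix F :: "nat set" assume fF: "finite F" and FN: "F \<subseteq> {N..}"
      show "norm (\<Sum>n\<in>F. x n) \<le> e"
      proof (cases "F = {}")
        case True then show ?thesis using epos by simp
      next
        case False
        define b where "b = Max F"
        have Fab: "F \<subseteq> {N..b}" using FN fF b_def by auto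
        have Nb: "N \<le> b" using False fF FN b_def by (metis Max_in atLeast_iff subsetD)
        define s1 where "s1 n = (1::real)" for n :: nat
        define s2 where "s2 n = (if n \<in> F then 1 else -1::real)" for n
        have "(\<Sum>n\<in>{N..b}. s1 n *\<^sub>R x n) + (\<Sum>n\<in>{N..b}. s2 n *\<^sub>R x n)
              = (\<Sum>n\<in>{N..b}. (if n \<in> F then 2 *\<^sub>R x n else 0))"
          unfolding sum.distrib[symmetric] by (rule sum.cong) (auto simp: s1_def s2_def scaleR_2)
        also have "\<dots> = 2 *\<^sub>R (\<Sum>n\<in>F. x n)"
          using Fab by (simp add: sum.If_cases scaleR_sum_right Int_absorb1)
        finally have eq: "2 *\<^sub>R (\<Sum>n\<in>F. x n) = (\<Sum>n\<in>{N..b}. s1 n *\<^sub>R x n) + (\<Sum>n\<in>{N..b}. s2 n *\<^sub>R x n)" by simp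
        have "norm (\<Sum>n\<in>{N..b}. s1 n *\<^sub>R x n) \<le> e" by (rule N[OF order_refl Nb]) (simp add: s1_def)
        moreover have "norm (\<Sum>n\<in>{N..b}. s2 n *\<^sub>R x n) \<le> e" by (rule N[OF order_refl Nb]) (simp add: s2_def)
        ultimately have "norm (2 *\<^sub>R (\<Sum>n\<in>F. x n)) \<le> 2 * e"
          unfolding eq by (metis add_mono mult_2 norm_triangle_le)
        then show ?thesis by simp
      qed
    qed
  qed
  have "unconditionally_convergent x"
    unfolding unconditionally_convergent_def
  proof (intro allI impI)
    fix p :: "nat \<Rightarrow> nat" assume bp: "bij p"
    show "summable (\<lambda>n. x (p n))"
      unfolding summable_Cauchy
    proof (intro allI impI)
      fix e :: real assume e: "e > 0"
      obtain N where N: "\<And>F. finite F \<Longrightarrow> F \<subseteq> {N..} \<Longrightarrow> norm (\<Sum>n\<in>F. x n) \<le> e/2"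
        using F[of "e/2"] e by auto
      have "finite {k. p k < N}"
        using finite_vimageI[of "{..<N}" p] bp by (simp add: bij_def vimage_def)
      then obtain M where M: "\<And>k. p k < N \<Longrightarrow> k < M"
        using finite_nat_set_iff_bounded by auto
      show "\<exists>M. \<forall>m\<ge>M. \<forall>n. norm (\<Sum>k\<in>{m..<n}. x (p k)) < e"
      proof (intro exI allI impI)
        fix m n assume "M \<le> m"
        have inj: "inj_on p {m..<n}" using bp by (simp add: bij_def inj_on_def inj_def)
        have "(\<Sum>k\<in>{m..<n}. x (p k)) = (\<Sum>j\<in>p ` {m..<n}. x j)"
          by (simp add: sum.reindex[OF inj])
        moreover have "p ` {m..<n} \<subseteq> {N..}"
          using M \<open>M \<le> m\<close> by (auto simp: not_less[symmetric]) (meson M le_trans not_le)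
        ultimately have "norm (\<Sum>k\<in>{m..<n}. x (p k)) \<le> e/2" using N by simp
        then show "norm (\<Sum>k\<in>{m..<n}. x (p k)) < e" using e by simp
      qed
    qed
  qed
  then show False using assms by simp
qed



primrec gT :: "(nat \<Rightarrow> 'a::real_normed_vector) \<Rightarrow> 'a \<Rightarrow> nat \<Rightarrow> 'a \<Rightarrow> nat \<Rightarrow> 'a" where
  "gT x v b c 0 = c"
| "gT x v b c (Suc j) = (if norm (gT x v b c j - v) \<le> norm (gT x v b c j + x (Suc (b + j)) - v)
      then gT x v b c j + x (Suc (b + j)) else gT x v b c j - x (Suc (b + j)))"

definition gS :: "(nat \<Rightarrow> 'a::real_normed_vector) \<Rightarrow> 'a \<Rightarrow> nat \<Rightarrow> 'a \<Rightarrow> nat \<Rightarrow> real" where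
  "gS x v b c j = (if norm (gT x v b c j - v) \<le> norm (gT x v b c j + x (Suc (b + j)) - v) then 1 else -1)"

lemma gT_Suc': "gT x v b c (Suc j) = gT x v b c j + gS x v b c j *\<^sub>R x (Suc (b + j))"
  by (simp add: gS_def)

lemma gS_sign: "gS x v b c j \<in> {-1, 1}"
  by (simp add: gS_def)

lemma gT_mono: "norm (c - v) \<le> norm (gT x v b c j - v)"
proof (induction j)
  case 0 then show ?case by simp
next
  case (Suc j)
  have "norm (gT x v b c j - v) \<le> norm (gT x v b c (Suc j) - v)"
    using greedy_step[of "gT x v b c j" v "x (Suc (b + j))"] by auto
  then show ?case using Suc by linarith
qed

lemma ext_step:
  fixes x :: "nat \<Rightarrow> 'a::real_normed_vector"
  assumes eps: "\<epsilon> > 0"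
    and blk: "\<forall>N. \<exists>a b s. N \<le> a \<and> a \<le> b \<and> (\<forall>n. s n \<in> {-1,1::real}) \<and>
            \<epsilon> < norm (\<Sum>n\<in>{a..b}. s n *\<^sub>R x n)"
    and fin: "\<And>l. finite (P l)"
    and late: "\<And>N K. \<exists>l\<ge>K. \<forall>n\<in>P l. N \<le> n"
    and q: "\<forall>n. q n \<in> {-1,1::real}"
  shows "\<exists>q' m' l. m \<le> m' \<and> (\<forall>n. q' n \<in> {-1,1::real}) \<and> (\<forall>n<m. q' n = q n) \<and> K \<le> l \<and>
           (\<forall>t. (\<forall>n<m'. t n = q' n) \<longrightarrow> (\<forall>n\<in>P l. \<epsilon> < norm (psum x t n - v)))"
proof -
  obtain a b s where ab: "m \<le> a" "a \<le> b" and s: "\<forall>n. s n \<in> {-1,1::real}"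
    and sw: "\<epsilon> < norm (\<Sum>n\<in>{a..b}. s n *\<^sub>R x n)"
    using blk by blast
  define w where "w = (\<Sum>n\<in>{a..b}. s n *\<^sub>R x n)"
  define qs where "qs \<sigma> n = (if n < m then q n else if n < a then 1 else if n \<le> b then \<sigma> * s n else 1)"
    for \<sigma> :: real and n
  define c where "c = (\<Sum>n<a. qs 1 n *\<^sub>R x n)"
  have psum_qs: "psum x (qs \<sigma>) b = c + \<sigma> *\<^sub>R w" for \<sigma>
  proof -
    have "{..b} = {..<a} \<union> {a..b}" using ab by auto
    then have "psum x (qs \<sigma>) b = (\<Sum>n<a. qs \<sigma> n *\<^sub>R x n) + (\<Sum>n\<in>{a..b}. qs \<sigma> n *\<^sub>R x n)"
      unfolding psum_def by (simp add: sum.union_disjoint ivl_disj_int)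
    moreover have "(\<Sum>n<a. qs \<sigma> n *\<^sub>R x n) = c"
      unfolding c_def by (rule sum.cong) (auto simp: qs_def)
    moreover have "(\<Sum>n\<in>{a..b}. qs \<sigma> n *\<^sub>R x n) = \<sigma> *\<^sub>R w"
      unfolding w_def scaleR_sum_right using ab by (intro sum.cong) (auto simp: qs_def)
    ultimately show ?thesis by simp
  qed
  obtain \<sigma> where \<sigma>: "\<sigma> \<in> {-1,1::real}" "\<epsilon> < norm (psum x (qs \<sigma>) b - v)"
  proof -
    have "2 *\<^sub>R w = (c + w - v) - (c - w - v)" by (simp add: algebra_simps scaleR_2)
    then have "2 * norm w \<le> norm (c + w - v) + norm (c - w - v)"
      by (metis norm_scaleR abs_numeral norm_triangle_ineq4)
    then have "\<epsilon> < norm (c + 1 *\<^sub>R w - v) \<or> \<epsilon> < norm (c + (-1) *\<^sub>R w - v)"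
      using sw w_def by auto
    then show ?thesis using that psum_qs by (metis insert_iff singletonI)
  qed
  define q1 where "q1 = qs \<sigma>"
  have q1s: "\<forall>n. q1 n \<in> {-1,1::real}" using q s \<sigma>(1) by (auto simp: q1_def qs_def)
  define c0 where "c0 = psum x q1 b"
  define q' where "q' n = (if n \<le> b then q1 n else gS x v b c0 (n - Suc b))" for n
  have q's: "\<forall>n. q' n \<in> {-1,1::real}" using q1s by (simp add: q'_def gS_def)
  have q'q: "\<forall>n<m. q' n = q n" using ab by (simp add: q'_def q1_def qs_def)
  obtain l where l: "K \<le> l" "\<forall>n\<in>P l. Suc b \<le> n" using late by blast
  obtain m2 where m2: "\<And>n. n \<in> P l \<Longrightarrow> n < m2" using fin[of l] finite_nat_set_iff_bounded by auto
  have psq': "psum x q' (b + j) = gT x v b c0 j" for j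
  proof (induction j)
    case 0 then show ?case unfolding c0_def by (simp, intro psum_cong) (simp add: q'_def)
  next
    case (Suc j)
    have "psum x q' (b + Suc j) = psum x q' (b + j) + q' (Suc (b + j)) *\<^sub>R x (Suc (b + j))"
      using psum_Suc by simp
    also have "q' (Suc (b + j)) = gS x v b c0 j" by (simp add: q'_def)
    finally show ?case using Suc.IH gT_Suc'[of x v b c0 j] by (simp del: gT.simps)
  qed
  show ?thesis
  proof (rule exI[of _ q'], rule exI[of _ "max m m2"], rule exI[of _ l], intro conjI)
    show "m \<le> max m m2" by simp
    show "\<forall>n. q' n \<in> {-1,1::real}" by (rule q's)
    show "\<forall>n<m. q' n = q n" by (rule q'q)
    show "K \<le> l" by (rule l)
    show "\<forall>t. (\<forall>n<max m m2. t n = q' n) \<longrightarrow> (\<forall>n\<in>P l. \<epsilon> < norm (psum x t n - v))"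
    proof (intro allI impI ballI)
    fix t n assume t: "\<forall>n<max m m2. t n = q' n" and n: "n \<in> P l"
    have "n < m2" using m2 n by blast
    then have "psum x t n = psum x q' n" using t by (intro psum_cong) auto
    also have "n = b + (n - b)" using l n by force
    then have "psum x q' n = gT x v b c0 (n - b)" using psq' by metis
    finally have "psum x t n = gT x v b c0 (n - b)" .
    moreover have "\<epsilon> < norm (c0 - v)" using \<sigma>(2) by (simp add: c0_def q1_def)
    ultimately show "\<epsilon> < norm (psum x t n - v)" using gT_mono[of c0 v x b "n - b"] by simp
  qed
  qed
qed



lemma iter_ext:
  fixes x :: "nat \<Rightarrow> 'a::real_normed_vector"
  assumes eps: "\<epsilon> > 0"
    and blk: "\<forall>N. \<exists>a b s. N \<le> a \<and> a \<le> b \<and> (\<forall>n. s n \<in> {-1,1::real}) \<and>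
            \<epsilon> < norm (\<Sum>n\<in>{a..b}. s n *\<^sub>R x n)"
    and fin: "\<And>l. finite (P l)"
    and late: "\<And>N K. \<exists>l\<ge>K. \<forall>n\<in>P l. N \<le> n"
    and V: "finite V"
  shows "\<forall>q m. (\<forall>n. q n \<in> {-1,1::real}) \<longrightarrow> (\<exists>q' m'. m \<le> m' \<and> (\<forall>n. q' n \<in> {-1,1::real}) \<and>
     (\<forall>n<m. q' n = q n) \<and>
     (\<forall>v\<in>V. \<exists>l\<ge>K. \<forall>t. (\<forall>n<m'. t n = q' n) \<longrightarrow> (\<forall>n\<in>P l. \<epsilon> < norm (psum x t n - v))))"
  using V
proof induction
  case empty
  show ?case
  proof (intro allI impI)
    fix q :: "nat \<Rightarrow> real" and m assume q: "\<forall>n. q n \<in> {-1,1}"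
    show "\<exists>q' m'. m \<le> m' \<and> (\<forall>n. q' n \<in> {-1,1::real}) \<and> (\<forall>n<m. q' n = q n) \<and>
     (\<forall>v\<in>{}. \<exists>l\<ge>K. \<forall>t. (\<forall>n<m'. t n = q' n) \<longrightarrow> (\<forall>n\<in>P l. \<epsilon> < norm (psum x t n - v)))"
      using q by (intro exI[of _ q] exI[of _ m]) simp
  qed
next
  case (insert v V)
  show ?case
  proof (intro allI impI)
    fix q :: "nat \<Rightarrow> real" and m assume q: "\<forall>n. q n \<in> {-1,1}"
    obtain q1 m1 l where 1: "m \<le> m1" "\<forall>n. q1 n \<in> {-1,1::real}" "\<forall>n<m. q1 n = q n" "K \<le> l"
      "\<forall>t. (\<forall>n<m1. t n = q1 n) \<longrightarrow> (\<forall>n\<in>P l. \<epsilon> < norm (psum x t n - v))"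
      using ext_step[OF eps blk fin late q, of m K v] by blast
    obtain q2 m2 where 2: "m1 \<le> m2" "\<forall>n. q2 n \<in> {-1,1::real}" "\<forall>n<m1. q2 n = q1 n"
      "\<forall>v\<in>V. \<exists>l\<ge>K. \<forall>t. (\<forall>n<m2. t n = q2 n) \<longrightarrow> (\<forall>n\<in>P l. \<epsilon> < norm (psum x t n - v))"
      using insert.IH[THEN spec[of _ q1], THEN spec[of _ m1], THEN mp, OF 1(2)] by (elim exE conjE) blast
    show "\<exists>q' m'. m \<le> m' \<and> (\<forall>n. q' n \<in> {-1,1::real}) \<and> (\<forall>n<m. q' n = q n) \<and>
     (\<forall>v\<in>insert v V. \<exists>l\<ge>K. \<forall>t. (\<forall>n<m'. t n = q' n) \<longrightarrow> (\<forall>n\<in>P l. \<epsilon> < norm (psum x t n - v)))"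
    proof (rule exI[of _ q2], rule exI[of _ m2], intro conjI)
      show "m \<le> m2" using 1 2 by simp
      show "\<forall>n. q2 n \<in> {-1,1::real}" by (rule 2(2))
      show "\<forall>n<m. q2 n = q n" using 1 2 by simp
      have "\<forall>t. (\<forall>n<m2. t n = q2 n) \<longrightarrow> (\<forall>n\<in>P l. \<epsilon> < norm (psum x t n - v))"
      proof (intro allI impI)
        fix t assume "\<forall>n<m2. t n = q2 n"
        then have "\<forall>n<m1. t n = q1 n" using 2(1,3) by simp
        then show "\<forall>n\<in>P l. \<epsilon> < norm (psum x t n - v)" using 1(5) by blast
      qed
      then have A: "\<exists>l\<ge>K. \<forall>t. (\<forall>n<m2. t n = q2 n) \<longrightarrow> (\<forall>n\<in>P l. \<epsilon> < norm (psum x t n - v))"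
        using 1(4) by blast
      show "\<forall>v'\<in>insert v V. \<exists>l\<ge>K. \<forall>t. (\<forall>n<m2. t n = q2 n) \<longrightarrow> (\<forall>n\<in>P l. \<epsilon> < norm (psum x t n - v'))"
      proof
        fix v' assume "v' \<in> insert v V"
        then consider (eq) "v' = v" | (mem) "v' \<in> V" by blast
        then show "\<exists>l\<ge>K. \<forall>t. (\<forall>n<m2. t n = q2 n) \<longrightarrow> (\<forall>n\<in>P l. \<epsilon> < norm (psum x t n - v'))"
        proof cases
          case eq then show ?thesis using A by simp
        next
          case mem then show ?thesis using 2(4) by blast
        qed
      qed
    qed
  qed
qed

lemma sign_X_sing: "a \<in> topspace (subtopology euclideanreal {-1,1}) \<Longrightarrow> openin (subtopology euclideanreal {-1,1}) {a}"
proof -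
  assume "a \<in> topspace (subtopology euclideanreal {-1,1})"
  then have a: "a = -1 \<or> a = 1" by simp
  show ?thesis
  proof (cases "a = 1")
    case True
    have "{a} = {0<..} \<inter> {-1,1::real}" using True by auto
    then show ?thesis by (metis openin_subtopology open_greaterThan open_openin)
  next
    case False
    then have "{a} = {..<0} \<inter> {-1,1::real}" using a by auto
    then show ?thesis by (metis openin_subtopology open_lessThan open_openin)
  qed
qed

lemma topspace_sign: "topspace sign_space = {t. \<forall>n. t n \<in> {-1,1}}"
  by (auto simp: sign_space_def PiE_def extensional_def)

lemma sign_nd:
  fixes x :: "nat \<Rightarrow> 'a::real_normed_vector"
  assumes eps: "\<epsilon> > 0"
    and blk: "\<forall>N. \<exists>a b s. N \<le> a \<and> a \<le> b \<and> (\<forall>n. s n \<in> {-1,1::real}) \<and>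
            \<epsilon> < norm (\<Sum>n\<in>{a..b}. s n *\<^sub>R x n)"
    and fin: "\<And>l. finite (P l)"
    and late: "\<And>N K. \<exists>l\<ge>K. \<forall>n\<in>P l. N \<le> n"
  shows "nowhere_dense_in sign_space
    {t \<in> topspace sign_space. \<exists>L. \<forall>k\<ge>K. \<exists>n\<in>P k. norm (psum x t n - L) \<le> \<epsilon>/3}"
    (is "nowhere_dense_in _ ?C")
proof (rule nd_intro)
  show "?C \<subseteq> topspace sign_space" by blast
  fix U assume U: "openin sign_space U" "U \<noteq> {}"
  let ?X = "subtopology euclideanreal {-1,1::real}"
  obtain y where y: "y \<in> U" using U by blast
  obtain N where N: "cyl ?X y N \<subseteq> U" using open_cyl[of ?X U y] U y unfolding sign_space_def by blast
  have ytop: "\<forall>n. y n \<in> {-1,1}" using y openin_subset[OF U(1)] topspace_sign by blast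
  obtain k where k: "K \<le> k" "\<forall>n\<in>P k. N \<le> n" using late by blast
  obtain m1 where m1: "\<And>n. n \<in> P k \<Longrightarrow> n < m1" using fin[of k] finite_nat_set_iff_bounded by auto
  define m0 where "m0 = max m1 N"
  define q0 where "q0 n = (if n < N then y n else 1::real)" for n
  have q0s: "\<forall>n. q0 n \<in> {-1,1}" using ytop by (simp add: q0_def)
  define V where "V = (\<lambda>n. psum x q0 n) ` P k"
  have fV: "finite V" using fin by (simp add: V_def)
  obtain q' m' where Q: "m0 \<le> m'" "\<forall>n. q' n \<in> {-1,1::real}" "\<forall>n<m0. q' n = q0 n"
     "\<forall>v\<in>V. \<exists>l\<ge>K. \<forall>t. (\<forall>n<m'. t n = q' n) \<longrightarrow> (\<forall>n\<in>P l. \<epsilon> < norm (psum x t n - v))"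
    using iter_ext[OF eps blk fin late fV, of K, THEN spec[of _ q0], THEN spec[of _ m0], THEN mp, OF q0s]
    by (elim exE conjE) blast
  show "\<exists>W. openin sign_space W \<and> W \<noteq> {} \<and> W \<subseteq> U \<and> W \<inter> ?C = {}"
  proof (rule exI[of _ "cyl ?X q' m'"], intro conjI)
    show "openin sign_space (cyl ?X q' m')"
      unfolding sign_space_def by (rule cyl_open) (use sign_X_sing Q(2) in auto)
    have "q' \<in> cyl ?X q' m'" using Q(2) by (simp add: cyl_def PiE_def extensional_def)
    then show "cyl ?X q' m' \<noteq> {}" by blast
    show "cyl ?X q' m' \<subseteq> U"
    proof
      fix t assume t: "t \<in> cyl ?X q' m'"
      then have "t \<in> cyl ?X y N" using Q(1,3) unfolding cyl_def m0_def q0_def by auto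
      then show "t \<in> U" using N by blast
    qed
    show "cyl ?X q' m' \<inter> ?C = {}"
    proof (rule ccontr)
      assume "cyl ?X q' m' \<inter> ?C \<noteq> {}"
      then obtain t where t0: "t \<in> cyl ?X q' m' \<inter> ?C" by (meson ex_in_conv)
      have t1: "t \<in> cyl ?X q' m'" "t \<in> ?C" using IntD1[OF t0] IntD2[OF t0] by auto
      then have t: "\<forall>n<m'. t n = q' n" unfolding cyl_def by blast
      obtain L where tC: "\<forall>k\<ge>K. \<exists>n\<in>P k. norm (psum x t n - L) \<le> \<epsilon>/3"
        using t1(2) by blast
      obtain n where n: "n \<in> P k" "norm (psum x t n - L) \<le> \<epsilon>/3" using tC k(1) by blast
      have "psum x t n = psum x q0 n"
        using t Q(1,3) m1[OF n(1)] unfolding m0_def by (intro psum_cong) auto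
      then have vV: "psum x t n \<in> V" using n(1) by (simp add: V_def)
      obtain l where l: "K \<le> l" "\<forall>n'\<in>P l. \<epsilon> < norm (psum x t n' - psum x t n)"
        using Q(4)[rule_format, OF vV] t by blast
      obtain n' where n': "n' \<in> P l" "norm (psum x t n' - L) \<le> \<epsilon>/3" using tC l(1) by blast
      have "norm (psum x t n' - psum x t n) \<le> \<epsilon>/3 + \<epsilon>/3"
        by (rule norm_diff_triangle_le[OF n'(2)]) (use n(2) in \<open>simp add: norm_minus_commute\<close>)
      then show False using l(2) n'(1) eps by fastforce
    qed
  qed
qed



abbreviation "BX \<equiv> discrete_topology (UNIV :: bool set)"

lemma cantor_eq: "cantor_space = product_topology (\<lambda>_. BX) UNIV"
  by (simp add: cantor_space_def)

lemma topspace_cantor [simp]: "topspace cantor_space = UNIV"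
  by (simp add: cantor_space_def PiE_def extensional_def)

lemma cyl_cantor_open: "openin cantor_space (cyl BX p m)"
  unfolding cantor_eq by (rule cyl_open) auto

lemma cyl_cantor_mem: "p \<in> cyl BX p m"
  by (simp add: cyl_def PiE_def extensional_def)

lemma cyl_cantor_iff: "t \<in> cyl BX p m \<longleftrightarrow> (\<forall>n<m. t n = p n)"
  by (simp add: cyl_def PiE_def extensional_def)

lemma open_cyl_cantor: "openin cantor_space U \<Longrightarrow> x \<in> U \<Longrightarrow> \<exists>m. cyl BX x m \<subseteq> U"
  unfolding cantor_eq by (rule open_cyl)

lemma cantor_lc_reg: "locally_compact_space cantor_space \<and> regular_space cantor_space"
proof -
  have c: "compact_space cantor_space"
    unfolding cantor_eq by (simp add: compact_space_product_topology compact_space_discrete_topology)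
  have h: "Hausdorff_space cantor_space"
    unfolding cantor_eq by (simp add: Hausdorff_space_product_topology)
  show ?thesis using c h compact_imp_locally_compact_space locally_compact_Hausdorff_or_regular by blast
qed

lemma cantor_baire:
  assumes "countable \<G>" "\<And>G. G \<in> \<G> \<Longrightarrow> closedin cantor_space G \<and> cantor_space interior_of G = {}"
  shows "cantor_space interior_of \<Union>\<G> = {}"
  using Baire_category_alt[of cantor_space \<G>] cantor_lc_reg assms by blast

lemma meager_mono: "meager_in T S \<Longrightarrow> S' \<subseteq> S \<Longrightarrow> meager_in T S'"
proof -
  assume a: "meager_in T S" "S' \<subseteq> S"
  then obtain F where F: "countable F" "\<forall>N\<in>F. nowhere_dense_in T N" "S \<subseteq> \<Union>F" "S \<subseteq> topspace T"
    unfolding meager_in_def by auto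
  show ?thesis unfolding meager_in_def
  proof (intro conjI exI[of _ F])
    show "S' \<subseteq> topspace T" using F(4) a(2) by (rule subset_trans[rotated])
    show "S' \<subseteq> \<Union>F" using F(3) a(2) by (rule subset_trans[rotated])
  qed (use F in auto)
qed

lemma meager_Un: "meager_in T S \<Longrightarrow> meager_in T S' \<Longrightarrow> meager_in T (S \<union> S')"
proof -
  assume a: "meager_in T S" "meager_in T S'"
  obtain F where F: "countable F" "\<forall>N\<in>F. nowhere_dense_in T N" "S \<subseteq> \<Union>F" "S \<subseteq> topspace T"
    using a(1) unfolding meager_in_def by auto
  obtain F' where F': "countable F'" "\<forall>N\<in>F'. nowhere_dense_in T N" "S' \<subseteq> \<Union>F'" "S' \<subseteq> topspace T"
    using a(2) unfolding meager_in_def by auto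
  show ?thesis unfolding meager_in_def
  proof (intro conjI exI[of _ "F \<union> F'"])
    show "S \<union> S' \<subseteq> topspace T" using F(4) F'(4) by (rule Un_least)
    show "countable (F \<union> F')" using F(1) F'(1) by simp
    show "\<forall>N\<in>F \<union> F'. nowhere_dense_in T N" using F(2) F'(2) by blast
    show "S \<union> S' \<subseteq> \<Union> (F \<union> F')" using F(3) F'(3) by blast
  qed
qed

lemma nd_homeo:
  assumes h: "homeomorphic_map X X f" and N: "nowhere_dense_in X N"
  shows "nowhere_dense_in X (f ` N)"
proof -
  have Ns: "N \<subseteq> topspace X" using N by (simp add: nowhere_dense_in_def)
  have "f ` N \<subseteq> topspace X" using h Ns homeomorphic_imp_surjective_map by blast
  moreover have "X closure_of (f ` N) = f ` (X closure_of N)" by (rule homeomorphic_map_closure_of[OF h Ns])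
  moreover have "X interior_of (f ` (X closure_of N)) = f ` (X interior_of (X closure_of N))"
    by (rule homeomorphic_map_interior_of[OF h closure_of_subset_topspace])
  ultimately show ?thesis using N by (simp add: nowhere_dense_in_def)
qed

lemma meager_homeo:
  assumes h: "homeomorphic_map X X f" and M: "meager_in X S"
  shows "meager_in X (f ` S)"
proof -
  obtain F where F: "countable F" "\<forall>N\<in>F. nowhere_dense_in X N" "S \<subseteq> \<Union>F" "S \<subseteq> topspace X"
    using M unfolding meager_in_def by auto
  have "f ` S \<subseteq> topspace X" using h F(4) homeomorphic_imp_surjective_map by blast
  moreover have "countable ((\<lambda>N. f ` N) ` F)" using F(1) by simp
  moreover have "\<forall>N\<in>(\<lambda>N. f ` N) ` F. nowhere_dense_in X N"
  proof
    fix N assume "N \<in> (\<lambda>N. f ` N) ` F"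
    then obtain N0 where "N0 \<in> F" "N = f ` N0" by blast
    then show "nowhere_dense_in X N" using F(2) nd_homeo[OF h] by simp
  qed
  moreover have "f ` S \<subseteq> \<Union>((\<lambda>N. f ` N) ` F)" using F(3) by blast
  ultimately show ?thesis unfolding meager_in_def by blast
qed

lemma open_not_meager:
  assumes "openin cantor_space U" "U \<noteq> {}" "meager_in cantor_space U"
  shows False
proof -
  obtain F where F: "countable F" "\<forall>N\<in>F. nowhere_dense_in cantor_space N" "U \<subseteq> \<Union>F"
    using assms(3) unfolding meager_in_def by auto
  have "cantor_space interior_of \<Union>((\<lambda>N. cantor_space closure_of N) ` F) = {}"
  proof (rule cantor_baire)
    show "countable ((\<lambda>N. cantor_space closure_of N) ` F)" using F(1) by simp
    fix G assume "G \<in> (\<lambda>N. cantor_space closure_of N) ` F"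
    then obtain N where "N \<in> F" "G = cantor_space closure_of N" by blast
    then show "closedin cantor_space G \<and> cantor_space interior_of G = {}"
      using F(2) by (simp add: nowhere_dense_in_def)
  qed
  moreover have cl: "\<And>N. N \<subseteq> cantor_space closure_of N" by (rule closure_of_subset) simp
  have "U \<subseteq> \<Union>((\<lambda>N. cantor_space closure_of N) ` F)"
  proof
    fix z assume "z \<in> U"
    then obtain N where "N \<in> F" "z \<in> N" using F(3) by blast
    then show "z \<in> \<Union>((\<lambda>N. cantor_space closure_of N) ` F)" using cl by blast
  qed
  then have "U \<subseteq> cantor_space interior_of \<Union>((\<lambda>N. cantor_space closure_of N) ` F)"
    by (rule interior_of_maximal[OF _ assms(1)])
  ultimately show False using assms(2) by blast
qed



definition phi :: "nat \<Rightarrow> (nat \<Rightarrow> bool) \<Rightarrow> nat \<Rightarrow> bool" where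
  "phi N f = (\<lambda>n. if n < N then f n else \<not> f n)"

lemma phi_inv [simp]: "phi N (phi N f) = f"
  by (simp add: phi_def)

lemma phi_cont: "continuous_map cantor_space cantor_space (phi N)"
  unfolding cantor_eq continuous_map_componentwise_UNIV
proof
  fix n :: nat
  have "continuous_map (product_topology (\<lambda>_. BX) UNIV) BX (\<lambda>f. f n)"
    by (rule continuous_map_product_projection) simp
  moreover have "continuous_map BX BX (\<lambda>b. if (n::nat) < N then b else \<not> b)" by simp
  ultimately have "continuous_map (product_topology (\<lambda>_. BX) UNIV) BX ((\<lambda>b. if n < N then b else \<not> b) \<circ> (\<lambda>f. f n))"
    by (rule continuous_map_compose)
  then show "continuous_map (product_topology (\<lambda>_. BX) UNIV) BX (\<lambda>x. phi N x n)"
    by (simp add: phi_def o_def)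
qed

lemma phi_homeo: "homeomorphic_map cantor_space cantor_space (phi N)"
  by (rule homeomorphic_map_involution[OF phi_cont]) simp

lemma ideal_meager:
  assumes I: "is_ideal \<I>" and B: "ideal_has_Baire_property \<I>"
  shows "meager_in cantor_space ((\<lambda>A n. n \<in> A) ` \<I>)"
proof -
  let ?J = "(\<lambda>A n. n \<in> A) ` \<I>"
  obtain U where U: "openin cantor_space U" "meager_in cantor_space ((?J - U) \<union> (U - ?J))"
    using B unfolding ideal_has_Baire_property_def has_Baire_property_in_def by blast
  show ?thesis
  proof (cases "U = {}")
    case True
    then show ?thesis using U(2) by simp
  next
    case False
    then obtain y where y: "y \<in> U" by blast
    obtain N where N: "cyl BX y N \<subseteq> U" using open_cyl_cantor[OF U(1) y] by blast
    define Z where "Z = cyl BX y N"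
    define M where "M = Z - ?J"
    have MM: "meager_in cantor_space M"
      by (rule meager_mono[OF U(2)]) (use N in \<open>auto simp: M_def Z_def\<close>)
    have phiZ: "phi N f \<in> Z" if "f \<in> Z" for f
      using that by (simp add: Z_def cyl_cantor_iff phi_def)
    have Zsub: "Z \<subseteq> M \<union> phi N ` M"
    proof
      fix f assume fZ: "f \<in> Z"
      show "f \<in> M \<union> phi N ` M"
      proof (cases "f \<in> ?J")
        case False then show ?thesis using fZ by (simp add: M_def)
      next
        case True
        then obtain A where A: "A \<in> \<I>" "f = (\<lambda>n. n \<in> A)" by blast
        have "phi N f \<notin> ?J"
        proof
          assume "phi N f \<in> ?J"
          then obtain B where B: "B \<in> \<I>" "phi N f = (\<lambda>n. n \<in> B)" by blast
          have "UNIV = (A \<union> B) \<union> {..<N}"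
          proof (rule set_eqI)
            fix n :: nat
            have "phi N f n = (n \<in> B)" using B(2) by metis
            then show "n \<in> UNIV \<longleftrightarrow> n \<in> (A \<union> B) \<union> {..<N}"
              using A(2) by (cases "n < N") (auto simp: phi_def)
          qed
          moreover have "(A \<union> B) \<union> {..<N} \<in> \<I>"
            using I A(1) B(1) unfolding is_ideal_def by (meson finite_lessThan)
          ultimately show False using I unfolding is_ideal_def by simp
        qed
        then have "phi N f \<in> M" using phiZ[OF fZ] by (simp add: M_def)
        then have "phi N (phi N f) \<in> phi N ` M" by blast
        then show ?thesis by simp
      qed
    qed
    have "meager_in cantor_space Z"
      by (rule meager_mono[OF meager_Un[OF MM meager_homeo[OF phi_homeo MM]] Zsub])
    moreover have "Z \<noteq> {}" using cyl_cantor_mem[of y N] by (auto simp: Z_def)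
    ultimately show ?thesis using open_not_meager[of Z] cyl_cantor_open by (simp add: Z_def)
  qed
qed



primrec Gs :: "(nat \<Rightarrow> (nat \<Rightarrow> bool) set) \<Rightarrow> nat \<Rightarrow> (nat \<Rightarrow> bool) set" where
  "Gs T 0 = cantor_space closure_of (T 0)"
| "Gs T (Suc k) = Gs T k \<union> cantor_space closure_of (T (Suc k))"

lemma Gs_closed: "closedin cantor_space (Gs T k)"
  by (induction k) auto

lemma Gs_mono: "k \<le> k' \<Longrightarrow> Gs T k \<subseteq> Gs T k'"
  by (induction rule: dec_induct) auto

lemma Gs_cover: "T k \<subseteq> Gs T k"
proof -
  have "T k \<subseteq> cantor_space closure_of T k" by (rule closure_of_subset) simp
  then show ?thesis by (cases k) auto
qed

lemma avoid1:
  assumes "nowhere_dense_in cantor_space S"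
  shows "\<exists>m' p'. m \<le> m' \<and> (\<forall>n<m. p' n = p n) \<and> cyl BX p' m' \<inter> cantor_space closure_of S = {}"
proof -
  obtain V where V: "openin cantor_space V" "V \<noteq> {}" "V \<subseteq> cyl BX p m" "V \<inter> cantor_space closure_of S = {}"
  proof -
    have ne: "cyl BX p m \<noteq> {}" using cyl_cantor_mem[of p m] by blast
    show ?thesis using nd_dest[OF assms cyl_cantor_open ne] that by blast
  qed
  obtain z where z: "z \<in> V" using V(2) by blast
  obtain m2 where m2: "cyl BX z m2 \<subseteq> V" using open_cyl_cantor[OF V(1) z] by blast
  have "z \<in> cyl BX p m" using z V(3) by (rule subsetD[rotated])
  then have zp: "\<forall>n<m. z n = p n" by (simp add: cyl_cantor_iff)
  have "cyl BX z (max m m2) \<subseteq> cyl BX z m2" by (auto simp: cyl_cantor_iff)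
  then have d: "cyl BX z (max m m2) \<inter> cantor_space closure_of S = {}" using m2 V(4) by blast
  show ?thesis
  proof (intro exI[of _ "max m m2"] exI[of _ z] conjI)
    show "m \<le> max m m2" by simp
  qed (use zp d in simp_all)
qed

lemma avoidG:
  assumes "\<And>j. nowhere_dense_in cantor_space (T j)"
  shows "\<exists>m' p'. m \<le> m' \<and> (\<forall>n<m. p' n = p n) \<and> cyl BX p' m' \<inter> Gs T k = {}"
proof (induction k arbitrary: m p)
  case 0 show ?case using avoid1[OF assms[of 0], of m p] by (simp only: Gs.simps)
next
  case (Suc k)
  obtain m1 p1 where 1: "m \<le> m1" "\<forall>n<m. p1 n = p n" "cyl BX p1 m1 \<inter> Gs T k = {}"
    using Suc.IH[of m p] by (elim exE conjE) (rule that)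
  obtain m2 p2 where 2: "m1 \<le> m2" "\<forall>n<m1. p2 n = p1 n"
    "cyl BX p2 m2 \<inter> cantor_space closure_of (T (Suc k)) = {}"
    using avoid1[OF assms[of "Suc k"], of m1 p1] by (elim exE conjE) (rule that)
  have sub: "cyl BX p2 m2 \<subseteq> cyl BX p1 m1" using 2(1,2) by (auto simp: cyl_cantor_iff)
  show ?case
  proof (intro exI[of _ m2] exI[of _ p2] conjI)
    show "m \<le> m2" using 1 2 by simp
    show "\<forall>n<m. p2 n = p n" using 1 2 by simp
    show "cyl BX p2 m2 \<inter> Gs T (Suc k) = {}" using sub 1(3) 2(3) by (simp only: Gs.simps) blast
  qed
qed

lemma finite_patterns: "finite {s :: nat \<Rightarrow> bool. \<forall>i\<ge>n. \<not> s i}"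
proof -
  have "{s :: nat \<Rightarrow> bool. \<forall>i\<ge>n. \<not> s i} \<subseteq> (\<lambda>A i. i \<in> A) ` Pow {..<n}"
  proof
    fix s :: "nat \<Rightarrow> bool" assume "s \<in> {s. \<forall>i\<ge>n. \<not> s i}"
    then have "{i. s i} \<in> Pow {..<n}" "s = (\<lambda>i. i \<in> {i. s i})" using not_less by auto
    then show "s \<in> (\<lambda>A i. i \<in> A) ` Pow {..<n}" by blast
  qed
  then show ?thesis by (rule finite_subset) simp
qed

definition goodnext :: "(nat \<Rightarrow> (nat \<Rightarrow> bool) set) \<Rightarrow> nat \<Rightarrow> nat \<Rightarrow> nat \<Rightarrow> bool" where
  "goodnext T k n m \<longleftrightarrow> n < m \<and> (\<forall>s. (\<forall>i\<ge>n. \<not> s i) \<longrightarrow>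
     (\<exists>u. (\<forall>i. u i \<longrightarrow> n \<le> i \<and> i < m) \<and> cyl BX (\<lambda>i. s i \<or> u i) m \<inter> Gs T k = {}))"

lemma goodnext_ex:
  assumes "\<And>j. nowhere_dense_in cantor_space (T j)"
  shows "\<exists>m. goodnext T k n m"
proof -
  let ?S = "{s :: nat \<Rightarrow> bool. \<forall>i\<ge>n. \<not> s i}"
  have "\<forall>s\<in>?S. \<exists>mp. n \<le> fst mp \<and> (\<forall>i<n. snd mp i = s i) \<and> cyl BX (snd mp) (fst mp) \<inter> Gs T k = {}"
  proof
    fix s assume "s \<in> ?S"
    obtain m' p' where "n \<le> m'" "\<forall>i<n. p' i = s i" "cyl BX p' m' \<inter> Gs T k = {}"
      using avoidG[where T=T and m=n and p=s and k=k, OF assms] by (elim exE conjE) (rule that)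
    then show "\<exists>mp. n \<le> fst mp \<and> (\<forall>i<n. snd mp i = s i) \<and> cyl BX (snd mp) (fst mp) \<inter> Gs T k = {}"
      by (intro exI[of _ "(m', p')"]) simp
  qed
  then obtain f where f: "\<And>s. s \<in> ?S \<Longrightarrow> n \<le> fst (f s) \<and> (\<forall>i<n. snd (f s) i = s i) \<and>
       cyl BX (snd (f s)) (fst (f s)) \<inter> Gs T k = {}"
    by metis
  define M where "M = Suc (Max (insert n ((\<lambda>s. fst (f s)) ` ?S)))"
  have fin: "finite (insert n ((\<lambda>s. fst (f s)) ` ?S))" using finite_patterns by simp
  have nM: "n < M" unfolding M_def using Max_ge[OF fin, of n] by simp
  have fM: "fst (f s) < M" if "s \<in> ?S" for s
    unfolding M_def using Max_ge[OF fin, of "fst (f s)"] that by simp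
  show ?thesis
    unfolding goodnext_def
  proof (intro exI[of _ M] conjI nM allI impI)
    fix s :: "nat \<Rightarrow> bool" assume s: "\<forall>i\<ge>n. \<not> s i"
    then have sS: "s \<in> ?S" by simp
    define u where "u i = (n \<le> i \<and> i < M \<and> snd (f s) i)" for i
    show "\<exists>u. (\<forall>i. u i \<longrightarrow> n \<le> i \<and> i < M) \<and> cyl BX (\<lambda>i. s i \<or> u i) M \<inter> Gs T k = {}"
    proof (intro exI[of _ u] conjI)
      show "\<forall>i. u i \<longrightarrow> n \<le> i \<and> i < M" by (simp add: u_def)
      have "cyl BX (\<lambda>i. s i \<or> u i) M \<subseteq> cyl BX (snd (f s)) (fst (f s))"
      proof
        fix t assume t: "t \<in> cyl BX (\<lambda>i. s i \<or> u i) M"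
        have "t i = snd (f s) i" if i: "i < fst (f s)" for i
        proof (cases "i < n")
          case True
          then show ?thesis using t fM[OF sS] i f[OF sS] by (auto simp: cyl_cantor_iff u_def)
        next
          case False
          then show ?thesis using t fM[OF sS] i s by (auto simp: cyl_cantor_iff u_def)
        qed
        then show "t \<in> cyl BX (snd (f s)) (fst (f s))" by (simp add: cyl_cantor_iff)
      qed
      then show "cyl BX (\<lambda>i. s i \<or> u i) M \<inter> Gs T k = {}" using f[OF sS] by blast
    qed
  qed
qed



primrec aseq :: "(nat \<Rightarrow> (nat \<Rightarrow> bool) set) \<Rightarrow> nat \<Rightarrow> nat" where
  "aseq T 0 = 0"
| "aseq T (Suc k) = (SOME m. goodnext T k (aseq T k) m)"

lemma psi_cont: "continuous_map cantor_space cantor_space (\<lambda>f n. f n \<and> n \<in> A)"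
  unfolding cantor_eq continuous_map_componentwise_UNIV
proof
  fix n :: nat
  have "continuous_map (product_topology (\<lambda>_. BX) UNIV) BX (\<lambda>f. f n)"
    by (rule continuous_map_product_projection) simp
  moreover have "continuous_map BX BX (\<lambda>b. b \<and> n \<in> A)" by simp
  ultimately have "continuous_map (product_topology (\<lambda>_. BX) UNIV) BX ((\<lambda>b. b \<and> n \<in> A) \<circ> (\<lambda>f. f n))"
    by (rule continuous_map_compose)
  then show "continuous_map (product_topology (\<lambda>_. BX) UNIV) BX (\<lambda>x. x n \<and> n \<in> A)"
    by (simp add: o_def)
qed

lemma meager_partition:
  assumes I: "is_ideal \<I>" and M: "meager_in cantor_space ((\<lambda>A n. n \<in> A) ` \<I>)"
  shows "\<exists>a. strict_mono a \<and> (\<forall>A\<in>\<I>. finite {k. {a k..<a (Suc k)} \<subseteq> A})"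
proof -
  let ?J = "(\<lambda>A n. n \<in> A) ` \<I>"
  obtain F where F: "countable F" "\<forall>N\<in>F. nowhere_dense_in cantor_space N" "?J \<subseteq> \<Union>F"
    using M unfolding meager_in_def by auto
  have "{} \<in> \<I>" using I unfolding is_ideal_def by simp
  then have "(\<lambda>n. n \<in> {}) \<in> ?J" by (rule imageI)
  then have "(\<lambda>n. n \<in> {}) \<in> \<Union>F" using F(3) by (rule subsetD[rotated])
  then have Fne: "F \<noteq> {}" by auto
  define T where "T = from_nat_into F"
  have rT: "range T = F" unfolding T_def using range_from_nat_into[OF Fne F(1)] .
  have ndT: "\<And>j. nowhere_dense_in cantor_space (T j)"
    unfolding T_def using F(2) from_nat_into[OF Fne] by simp
  define a where "a = aseq T"
  have good: "goodnext T k (a k) (a (Suc k))" for k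
    unfolding a_def aseq.simps(2) by (rule someI_ex[OF goodnext_ex[OF ndT]])
  have sm: "strict_mono a"
    unfolding strict_mono_Suc_iff using good by (simp add: goodnext_def)
  have cover: "\<exists>k. g \<in> Gs T k" if "g \<in> ?J" for g
  proof -
    have "g \<in> \<Union>F" using F(3) that by (rule subsetD)
    then obtain N where N: "N \<in> F" "g \<in> N" by (rule UnionE)
    then have "N \<in> range T" using rT by simp
    then obtain j where "N = T j" by (rule rangeE)
    then have "g \<in> T j" using N(2) by simp
    then show ?thesis by (intro exI[of _ j], rule subsetD[OF Gs_cover])
  qed
  have fin: "finite {k. {a k..<a (Suc k)} \<subseteq> A}" if A: "A \<in> \<I>" for A
  proof (rule ccontr)
    assume inf: "infinite {k. {a k..<a (Suc k)} \<subseteq> A}"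
    define psi where "psi f = (\<lambda>n. f n \<and> n \<in> A)" for f :: "nat \<Rightarrow> bool"
    define H where "H k = {f \<in> topspace cantor_space. psi f \<in> Gs T k}" for k
    have Hcl: "closedin cantor_space (H k)" for k
      unfolding H_def psi_def by (rule closedin_continuous_map_preimage[OF psi_cont Gs_closed])
    have Hcov: "\<Union>(range H) = UNIV"
    proof (rule set_eqI)
      fix f :: "nat \<Rightarrow> bool"
      have "{n. f n \<and> n \<in> A} \<subseteq> A" by blast
      moreover have "\<forall>A\<in>\<I>. \<forall>B. B \<subseteq> A \<longrightarrow> B \<in> \<I>" using I unfolding is_ideal_def by simp
      ultimately have "{n. f n \<and> n \<in> A} \<in> \<I>" using A by simp
      then have "psi f \<in> ?J" unfolding psi_def by (rule rev_image_eqI) simp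
      then obtain k where "psi f \<in> Gs T k" using cover[of "psi f"] by blast
      then show "f \<in> \<Union>(range H) \<longleftrightarrow> f \<in> UNIV" by (auto simp: H_def)
    qed
    have Hint: "cantor_space interior_of H k = {}" for k
    proof (rule ccontr)
      assume "cantor_space interior_of H k \<noteq> {}"
      then obtain z where z: "z \<in> cantor_space interior_of H k" by blast
      obtain m where m: "cyl BX z m \<subseteq> cantor_space interior_of H k"
        using open_cyl_cantor[OF openin_interior_of z] by blast
      obtain k' where k': "max k m \<le> k'" "{a k'..<a (Suc k')} \<subseteq> A"
      proof -
        have "\<forall>m. \<exists>n\<ge>m. n \<in> {k. {a k..<a (Suc k)} \<subseteq> A}"
          by (rule infinite_nat_iff_unbounded_le[THEN iffD1, OF inf])
        then obtain k' where "max k m \<le> k'" "k' \<in> {k. {a k..<a (Suc k)} \<subseteq> A}" by blast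
        then show ?thesis using that by simp
      qed
      have mk: "m \<le> a k'" using k'(1) seq_suble[OF sm, of k'] by simp
      define n0 where "n0 = a k'"
      define n1 where "n1 = a (Suc k')"
      define f0 where "f0 i = (i < m \<and> z i)" for i
      define s where "s i = (i < n0 \<and> f0 i \<and> i \<in> A)" for i
      have s0: "\<forall>i\<ge>n0. \<not> s i" by (simp add: s_def)
      obtain u where u: "\<forall>i. u i \<longrightarrow> n0 \<le> i \<and> i < n1" "cyl BX (\<lambda>i. s i \<or> u i) n1 \<inter> Gs T k' = {}"
      proof -
        have G1: "\<forall>s. (\<forall>i\<ge>n0. \<not> s i) \<longrightarrow>
          (\<exists>u. (\<forall>i. u i \<longrightarrow> n0 \<le> i \<and> i < n1) \<and> cyl BX (\<lambda>i. s i \<or> u i) n1 \<inter> Gs T k' = {})"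
          using good[of k'] unfolding goodnext_def n0_def n1_def by simp
        have "\<exists>u. (\<forall>i. u i \<longrightarrow> n0 \<le> i \<and> i < n1) \<and> cyl BX (\<lambda>i. s i \<or> u i) n1 \<inter> Gs T k' = {}"
          using mp[OF spec[OF G1, of s] s0] .
        then show ?thesis using that by blast
      qed
      define f1 where "f1 i = (if i < n0 then f0 i else u i)" for i
      have "f1 \<in> cyl BX z m" using mk by (simp add: cyl_cantor_iff f1_def f0_def n0_def)
      then have "f1 \<in> cantor_space interior_of H k" using m by (rule subsetD[rotated])
      then have "f1 \<in> H k" using interior_of_subset[of cantor_space "H k"] by (rule subsetD[rotated])
      then have "psi f1 \<in> Gs T k'" using Gs_mono[of k k'] k'(1) by (auto simp: H_def)
      moreover have "psi f1 \<in> cyl BX (\<lambda>i. s i \<or> u i) n1"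
        unfolding cyl_cantor_iff
      proof (intro allI impI)
        fix i assume i: "i < n1"
        show "psi f1 i = (s i \<or> u i)"
        proof (cases "i < n0")
          case True then show ?thesis using u(1) by (auto simp: psi_def f1_def s_def)
        next
          case False
          then have "i \<in> A" if "u i" using u(1) k'(2) that unfolding n0_def n1_def by auto
          then show ?thesis using False by (auto simp: psi_def f1_def s_def)
        qed
      qed
      ultimately show False using u(2) by blast
    qed
    have "cantor_space interior_of \<Union>(range H) = {}"
      by (rule cantor_baire) (use Hcl Hint in auto)
    then show False using Hcov by (simp add: interior_of_topspace[of cantor_space, simplified])
  qed
  show ?thesis using sm fin by blast
qed



theorem theorem3p4:
  fixes x :: "nat \<Rightarrow> 'a::banach"
    and \<I> :: "nat set set"
  assumes "\<not> unconditionally_convergent x"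
    and "is_ideal \<I>"
    and "ideal_has_Baire_property \<I>"
  shows "meager_in sign_space
           {t \<in> topspace sign_space. I_convergent_series \<I> (\<lambda>n. t n *\<^sub>R x n)}"
proof -
  obtain \<epsilon> where eps: "\<epsilon> > 0" and blk: "\<forall>N. \<exists>a b s. N \<le> a \<and> a \<le> b \<and> (\<forall>n. s n \<in> {-1,1::real}) \<and>
            \<epsilon> < norm (\<Sum>n\<in>{a..b}. s n *\<^sub>R x n)"
    using blocks[OF assms(1)] by blast
  obtain a where sm: "strict_mono a" and part: "\<forall>A\<in>\<I>. finite {k. {a k..<a (Suc k)} \<subseteq> A}"
    using meager_partition[OF assms(2) ideal_meager[OF assms(2,3)]] by blast
  define P where "P k = {a k..<a (Suc k)}" for k
  have fin: "\<And>l. finite (P l)" by (simp add: P_def)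
  have late: "\<And>N K. \<exists>l\<ge>K. \<forall>n\<in>P l. N \<le> n"
  proof -
    fix N K :: nat
    have "\<forall>n\<in>P (max N K). N \<le> n"
    proof
      fix n assume "n \<in> P (max N K)"
      then have "a (max N K) \<le> n" by (simp add: P_def)
      moreover have "max N K \<le> a (max N K)" by (rule seq_suble[OF sm])
      ultimately show "N \<le> n" by simp
    qed
    then show "\<exists>l\<ge>K. \<forall>n\<in>P l. N \<le> n" by (intro exI[of _ "max N K"]) simp
  qed
  define C where "C K = {t \<in> topspace sign_space. \<exists>L. \<forall>k\<ge>K. \<exists>n\<in>P k. norm (psum x t n - L) \<le> \<epsilon>/3}" for K
  have ndC: "nowhere_dense_in sign_space (C K)" for K
    unfolding C_def by (rule sign_nd[OF eps blk fin late])
  have sub: "{t \<in> topspace sign_space. I_convergent_series \<I> (\<lambda>n. t n *\<^sub>R x n)} \<subseteq> \<Union>(range C)"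
  proof
    fix t assume t: "t \<in> {t \<in> topspace sign_space. I_convergent_series \<I> (\<lambda>n. t n *\<^sub>R x n)}"
    then have tt: "t \<in> topspace sign_space" by simp
    obtain L where L: "\<forall>e>0. {n. norm ((\<Sum>k\<le>n. t k *\<^sub>R x k) - L) > e} \<in> \<I>"
      using t unfolding I_convergent_series_def I_convergent_to_def by auto
    define A where "A = {n. norm (psum x t n - L) > \<epsilon>/3}"
    have "\<epsilon>/3 > 0" using eps by simp
    then have AI: "A \<in> \<I>" using L unfolding A_def psum_def by blast
    then have "finite {k. P k \<subseteq> A}" using part unfolding P_def by simp
    then obtain K where K: "\<And>k. k \<in> {k. P k \<subseteq> A} \<Longrightarrow> k < K"
      using finite_nat_set_iff_bounded by auto
    have "\<forall>k\<ge>K. \<exists>n\<in>P k. norm (psum x t n - L) \<le> \<epsilon>/3"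
    proof (intro allI impI)
      fix k assume "K \<le> k"
      then have "\<not> P k \<subseteq> A" using K by fastforce
      then obtain n where "n \<in> P k" "n \<notin> A" by blast
      then show "\<exists>n\<in>P k. norm (psum x t n - L) \<le> \<epsilon>/3" unfolding A_def by (auto simp: not_less)
    qed
    then have "t \<in> C K" unfolding C_def using tt by blast
    then show "t \<in> \<Union>(range C)" by blast
  qed
  show ?thesis
    unfolding meager_in_def
  proof (intro conjI exI[of _ "range C"])
    show "{t \<in> topspace sign_space. I_convergent_series \<I> (\<lambda>n. t n *\<^sub>R x n)} \<subseteq> topspace sign_space" by blast
    show "countable (range C)" by simp
    show "\<forall>N\<in>range C. nowhere_dense_in sign_space N" using ndC by blast
  qed (rule sub)
qed

end
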